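(* Let $\beta\in\mathbb{R}^p$ be fixed and $\sigma^2>0$. Assume the following: - $(X^TDX)^{-1}$ exists with probability $1$; - $v^g_l<\infty$; - there is a constant $\delta>0$, not depending on $x$, with $\mathbb{E}[g'(x^T\beta)\mid xx^T]=\delta$. Then: 1. $v^g_l+v^g_u-2v^g_s>0$. 2. The function $\dot r$ has a unique global minimizer $\dot\alpha$ over $\alpha\in\mathbb{R}$, which lies in $(0,\infty)$ and equals $$\dot\alpha=\frac{\sigma^2(v^g_l-v^g_s)}{B_g(\breve\beta)+\sigma^2(v^g_l+v^g_u-2v^g_s)}.$$ 3. The minimum value is $$\dot r(\dot\alpha)=\sigma^2v^g_l-\frac{\sigma^4(v^g_l-v^g_s)^2}{B_g(\breve\beta)+\sigma^2(v^g_l+v^g_u-2v^g_s)}.$$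
   Context: Let $p<n$. The labeled data $(x_1,y_1),\dots,(x_n,y_n)$ are i.i.d. copies of $(x,y)\in\mathbb{R}^p\times\mathbb{R}$. Write $X\in\mathbb{R}^{n\times p}$ for the matrix with rows $x_i^T$ and $Y=(y_1,\dots,y_n)^T$. The distribution $P_x$ is known and satisfies $\mathbb{E}[x]=0$. The model is a generalized linear model, $\mathbb{E}[y\mid x]=g(x^T\beta)$, with a known, monotonically increasing, differentiable link $g$ and $\mathrm{Var}(y\mid x)=\sigma^2$. Notation: - $\mu\in\mathbb{R}^n$ has $\mu_i=g(x_i^T\beta)$. - $D$ is diagonal with $D_{ii}=g'(x_i^T\beta)$. - $H_g=\mathbb{E}_X[X^TDX]$. - $\widehat{\mathrm{Cov}}(X,\mu)\in\mathbb{R}^p$ has $j$-th entry $\frac1n\sum_i(x_{ij}-\bar X_j)(\mu_i-\bar\mu)$, where $\bar X_j=\frac1n\sum_i x_{ij}$ and $\bar\mu=\frac1n\sum_i\mu_i$. Define: - $v^g_l=\mathrm{tr}\big(\mathbb{E}_X[(X^TDX)^{-1}X^TX(X^TDX)^{-1}]H_g\big)$; - $v^g_u=\frac{n-1}{n}\mathrm{tr}(H_g^{-1}\mathbb{E}_X[X^TX])$; - $v^g_s=\frac{n-1}{n}\mathrm{tr}\big(\mathbb{E}_X[X^TX(X^TDX)^{-1}]\big)$; - $B_g(\breve\beta)=\mathrm{tr}\big(H_g^{-1}\mathrm{Var}_X(n\widehat{\mathrm{Cov}}(X,\mu))\big)$. The quadratic approximation of the prediction error of the linear-mixed estimator, up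 to a positive constant and an additive constant, is the function $$\dot r(\alpha)=\alpha^2B_g(\breve\beta)+\sigma^2\big(\alpha^2v^g_u+(1-\alpha)^2v^g_l+2\alpha(1-\alpha)v^g_s\big),\qquad \alpha\in\mathbb{R}.$$ *)

theory Defs
  imports "HOL-Analysis.Analysis" "HOL-Probability.Probability"
begin

definition outerp :: "real^'a \<Rightarrow> real^'b \<Rightarrow> real^'b^'a" where
  "outerp a b = (\<chi> i j. a$i * b$j)"

text \<open>Sample space of the i.i.d. design: rows x_i, i in the finite type 'n (n = CARD('n)).\<close>
definition sampleM :: "(real^'p) measure \<Rightarrow> ('n::finite \<Rightarrow> real^'p) measure" where
  "sampleM Px = PiM UNIV (\<lambda>_. Px)"

definition Xmat :: "('n::finite \<Rightarrow> real^'p) \<Rightarrow> real^'p^'n" where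
  "Xmat w = (\<chi> i. w i)"

definition Dmat :: "(real \<Rightarrow> real) \<Rightarrow> real^'p \<Rightarrow> ('n::finite \<Rightarrow> real^'p) \<Rightarrow> real^'n^'n" where
  "Dmat g \<beta> w = (\<chi> i k. if i = k then deriv g (w i \<bullet> \<beta>) else 0)"

definition muvec :: "(real \<Rightarrow> real) \<Rightarrow> real^'p \<Rightarrow> ('n::finite \<Rightarrow> real^'p) \<Rightarrow> real^'n" where
  "muvec g \<beta> w = (\<chi> i. g (w i \<bullet> \<beta>))"

definition XtX :: "('n::finite \<Rightarrow> real^'p) \<Rightarrow> real^'p^'p" where
  "XtX w = transpose (Xmat w) ** Xmat w"

definition XtDX :: "(real \<Rightarrow> real) \<Rightarrow> real^'p \<Rightarrow> ('n::finite \<Rightarrow> real^'p) \<Rightarrow> real^'p^'p" where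
  "XtDX g \<beta> w = transpose (Xmat w) ** Dmat g \<beta> w ** Xmat w"

definition covhat :: "(real \<Rightarrow> real) \<Rightarrow> real^'p \<Rightarrow> ('n::finite \<Rightarrow> real^'p) \<Rightarrow> real^'p" where
  "covhat g \<beta> w = (\<chi> j.
     (1 / real CARD('n)) * (\<Sum>i\<in>UNIV.
        ((Xmat w)$i$j - (1 / real CARD('n)) * (\<Sum>k\<in>UNIV. (Xmat w)$k$j)) *
        ((muvec g \<beta> w)$i - (1 / real CARD('n)) * (\<Sum>k\<in>UNIV. (muvec g \<beta> w)$k))))"

definition varmat :: "'s measure \<Rightarrow> ('s \<Rightarrow> real^'p) \<Rightarrow> real^'p^'p" where
  "varmat M Z = integral\<^sup>L M (\<lambda>w. outerp (Z w - integral\<^sup>L M Z) (Z w - integral\<^sup>L M Z))"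

definition Hg :: "(real^'p) measure \<Rightarrow> (real \<Rightarrow> real) \<Rightarrow> real^'p \<Rightarrow> 'n::finite itself \<Rightarrow> real^'p^'p" where
  "Hg Px g \<beta> (_::'n itself) = integral\<^sup>L (sampleM Px :: ('n \<Rightarrow> real^'p) measure) (XtDX g \<beta>)"

definition vgl :: "(real^'p) measure \<Rightarrow> (real \<Rightarrow> real) \<Rightarrow> real^'p \<Rightarrow> 'n::finite itself \<Rightarrow> real" where
  "vgl Px g \<beta> N = trace (integral\<^sup>L (sampleM Px :: ('n \<Rightarrow> real^'p) measure)
      (\<lambda>w. matrix_inv (XtDX g \<beta> w) ** XtX w ** matrix_inv (XtDX g \<beta> w)) ** Hg Px g \<beta> N)"

definition vgu :: "(real^'p) measure \<Rightarrow> (real \<Rightarrow> real) \<Rightarrow> real^'p \<Rightarrow> 'n::finite itself \<Rightarrow> real" where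
  "vgu Px g \<beta> N = (real CARD('n) - 1) / real CARD('n) *
      trace (matrix_inv (Hg Px g \<beta> N) ** integral\<^sup>L (sampleM Px :: ('n \<Rightarrow> real^'p) measure) XtX)"

definition vgs :: "(real^'p) measure \<Rightarrow> (real \<Rightarrow> real) \<Rightarrow> real^'p \<Rightarrow> 'n::finite itself \<Rightarrow> real" where
  "vgs Px g \<beta> (_::'n itself) = (real CARD('n) - 1) / real CARD('n) *
      trace (integral\<^sup>L (sampleM Px :: ('n \<Rightarrow> real^'p) measure) (\<lambda>w. XtX w ** matrix_inv (XtDX g \<beta> w)))"

definition Bg :: "(real^'p) measure \<Rightarrow> (real \<Rightarrow> real) \<Rightarrow> real^'p \<Rightarrow> 'n::finite itself \<Rightarrow> real" where
  "Bg Px g \<beta> N = trace (matrix_inv (Hg Px g \<beta> N) **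
      varmat (sampleM Px :: ('n \<Rightarrow> real^'p) measure) (\<lambda>w. real CARD('n) *\<^sub>R covhat g \<beta> w))"

definition rdot :: "(real^'p) measure \<Rightarrow> (real \<Rightarrow> real) \<Rightarrow> real^'p \<Rightarrow> real \<Rightarrow> 'n::finite itself \<Rightarrow> real \<Rightarrow> real" where
  "rdot Px g \<beta> \<sigma>2 N \<alpha> = \<alpha>^2 * Bg Px g \<beta> N + \<sigma>2 * (\<alpha>^2 * vgu Px g \<beta> N + (1 - \<alpha>)^2 * vgl Px g \<beta> N
      + 2 * \<alpha> * (1 - \<alpha>) * vgs Px g \<beta> N)"

end

theory Submission
  imports Defs
begin



lemma deriv_measurable:
  fixes g :: "real \<Rightarrow> real"
  assumes "\<And>t. g differentiable (at t)"
  shows "deriv g \<in> borel_measurable borel"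
proof (rule borel_measurable_LIMSEQ_real)
  fix x :: real
  have D: "(g has_real_derivative deriv g x) (at x)"
    using assms DERIV_deriv_iff_real_differentiable by blast
  have c: "continuous_on UNIV g"
    using assms by (meson continuous_at_imp_continuous_on differentiable_imp_continuous_within)
  have "((\<lambda>h. (g (x + h) - g x) / h) \<longlongrightarrow> deriv g x) (at 0)"
    using D DERIV_def by blast
  moreover have "(\<lambda>n. 1 / real (Suc n)) \<longlonglongrightarrow> 0" using LIMSEQ_inverse_real_of_nat by (simp add: inverse_eq_divide)
  ultimately have "(\<lambda>n. (g (x + 1 / real (Suc n)) - g x) / (1 / real (Suc n))) \<longlonglongrightarrow> deriv g x"
  proof -
    note L = \<open>((\<lambda>h. (g (x + h) - g x) / h) \<longlongrightarrow> deriv g x) (at 0)\<close>[unfolded LIMSEQ_SEQ_conv[symmetric]]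
    show ?thesis using L[rule_format, of "\<lambda>n. 1 / real (Suc n)"] \<open>(\<lambda>n. 1 / real (Suc n)) \<longlonglongrightarrow> 0\<close> by simp
  qed
  then show "(\<lambda>n. (g (x + 1 / real (Suc n)) - g x) * real (Suc n)) \<longlonglongrightarrow> deriv g x"
    by simp
next
  fix n :: nat
  have c: "continuous_on UNIV g"
    using assms by (meson continuous_at_imp_continuous_on differentiable_imp_continuous_within)
  have "g \<in> borel_measurable borel" using c borel_measurable_continuous_onI by blast
  then show "(\<lambda>x. (g (x + 1 / real (Suc n)) - g x) * real (Suc n)) \<in> borel_measurable borel"
    by measurable
qed

lemma deriv_nonneg:
  fixes g :: "real \<Rightarrow> real"
  assumes "mono g" "\<And>t. g differentiable (at t)"
  shows "deriv g t \<ge> 0"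
  using mono_on_imp_deriv_nonneg[of UNIV g "deriv g t" t] assms
  by (simp add: DERIV_deriv_iff_real_differentiable)



lemma borel_measurable_vecI:
  fixes f :: "'m \<Rightarrow> 'a::euclidean_space ^ 'n"
  assumes "\<And>i. (\<lambda>x. f x $ i) \<in> borel_measurable M"
  shows "f \<in> borel_measurable M"
proof (subst borel_measurable_euclidean_space, intro ballI)
  fix b :: "'a^'n" assume "b \<in> Basis"
  then obtain i u where b: "b = axis i u" "u \<in> Basis" unfolding Basis_vec_def by auto
  have "(\<lambda>x. (f x $ i) \<bullet> u) \<in> borel_measurable M"
    using assms[of i] by measurable
  then show "(\<lambda>x. f x \<bullet> b) \<in> borel_measurable M"
    by (simp add: b inner_axis)
qed

lemma borel_measurable_vec_nth_gen[measurable]: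
  "(\<lambda>x::'a::euclidean_space^'n. x $ i) \<in> borel_measurable borel"
  by (intro borel_measurable_continuous_onI linear_continuous_on bounded_linear_vec_nth)

lemma mm_measurable[measurable (raw)]:
  fixes f :: "'a \<Rightarrow> real^'n^'m" and g :: "'a \<Rightarrow> real^'k^'n"
  assumes [measurable]: "f \<in> borel_measurable M" "g \<in> borel_measurable M"
  shows "(\<lambda>x. f x ** g x) \<in> borel_measurable M"
  by (intro borel_measurable_vecI) (simp add: matrix_matrix_mult_def)

lemma trace_measurable[measurable (raw)]:
  fixes f :: "'a \<Rightarrow> real^'n^'n"
  assumes [measurable]: "f \<in> borel_measurable M"
  shows "(\<lambda>x. trace (f x)) \<in> borel_measurable M"
  unfolding trace_def by measurable

lemma outerp_measurable[measurable]: "(\<lambda>x::real^'p. outerp x x) \<in> borel_measurable borel"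
  unfolding outerp_def
  by (intro borel_measurable_vecI) simp

definition minv :: "real^'p^'p \<Rightarrow> real^'p^'p" where
  "minv C = (\<chi> k j. det (\<chi> a l. if l = k then (if a = j then 1 else 0) else C$a$l) / det C)"

lemma det_measurable[measurable]: "(det :: real^'p^'p \<Rightarrow> real) \<in> borel_measurable borel"
  unfolding det_def by measurable

lemma minv_measurable[measurable]: "minv \<in> borel_measurable borel"
proof (intro borel_measurable_vecI)
  fix k j
  have "(\<lambda>C::real^'p^'p. (\<chi> a l. if l = k then (if a = j then 1 else 0) else C$a$l) :: real^'p^'p) \<in> borel_measurable borel"
    by (intro borel_measurable_vecI) simp
  then have "(\<lambda>C::real^'p^'p. det (\<chi> a l. if l = k then (if a = j then 1 else 0) else C$a$l)) \<in> borel_measurable borel"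
    using det_measurable by (rule measurable_compose)
  then show "(\<lambda>x. minv x $ k $ j) \<in> borel_measurable borel"
    unfolding minv_def by simp
qed

lemma minv_eq:
  fixes C :: "real^'p^'p"
  assumes "det C \<noteq> 0"
  shows "minv C = matrix_inv C"
proof -
  have inv: "invertible C" using assms invertible_det_nz by blast
  obtain Ci where "C ** Ci = mat 1" "Ci ** C = mat 1" using inv unfolding invertible_def by blast
  have CCi: "C ** matrix_inv C = mat 1"
  proof -
    have "\<exists>A'. C ** A' = mat 1 \<and> A' ** C = mat 1" using inv unfolding invertible_def by blast
    then show ?thesis unfolding matrix_inv_def by (rule someI2_ex) auto
  qed
  show ?thesis
  proof (simp add: vec_eq_iff, intro allI)
    fix k j
    have "C *v (matrix_inv C *v axis j 1) = axis j 1"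
      by (simp add: matrix_vector_mul_assoc CCi)
    then have "matrix_inv C *v axis j 1 = (\<chi> k. det(\<chi> i l. if l=k then (axis j 1 :: real^'p)$i else C$i$l) / det C)"
      using cramer[OF assms] by blast
    then have "(matrix_inv C *v axis j 1) $ k = det(\<chi> i l. if l=k then (axis j 1 :: real^'p)$i else C$i$l) / det C"
      by simp
    moreover have "(matrix_inv C *v axis j 1) $ k = matrix_inv C $ k $ j"
      by (simp add: matrix_vector_mult_def axis_def if_distrib cong: if_cong)
    moreover have "(\<chi> i l. if l=k then (axis j 1 :: real^'p)$i else C$i$l) = (\<chi> a l. if l = k then (if a = j then 1 else 0) else C$a$l)"
      by (simp add: axis_def vec_eq_iff)
    ultimately show "minv C $ k $ j = matrix_inv C $ k $ j"
      by (simp add: minv_def)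
  qed
qed

lemma px_key:
  fixes Px :: "(real^'p) measure" and d :: "real^'p \<Rightarrow> real" and \<psi> :: "real^'p^'p \<Rightarrow> ennreal"
  assumes Px_prob: "prob_space Px" and Px_sets: "sets Px = sets borel"
    and d_meas: "d \<in> borel_measurable borel" and d_nonneg: "\<And>x. d x \<ge> 0"
    and cond: "AE x in Px. real_cond_exp Px (vimage_algebra (space Px) (\<lambda>x. outerp x x) borel) d x = \<delta>"
    and delta: "\<delta> > 0"
    and psi: "\<psi> \<in> borel_measurable borel"
  shows "(\<integral>\<^sup>+ x. ennreal (d x) * \<psi> (outerp x x) \<partial>Px) = ennreal \<delta> * (\<integral>\<^sup>+ x. \<psi> (outerp x x) \<partial>Px)"
proof -
  define F where "F = vimage_algebra (space Px) (\<lambda>x::real^'p. outerp x x) borel"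
  have om: "(\<lambda>x::real^'p. outerp x x) \<in> borel_measurable Px"
    using measurable_cong_sets[OF Px_sets refl] outerp_measurable by blast
  have dm[measurable]: "d \<in> borel_measurable Px"
    using measurable_cong_sets[OF Px_sets refl] d_meas by blast
  have sub: "subalgebra Px F"
    unfolding subalgebra_def F_def
  proof
    show "space (vimage_algebra (space Px) (\<lambda>x. outerp x x) borel) = space Px" by simp
    show "sets (vimage_algebra (space Px) (\<lambda>x. outerp x x) borel) \<subseteq> sets Px"
      using om by (auto simp: sets_vimage_algebra2 measurable_sets)
  qed
  interpret prob_space Px by (rule Px_prob)
  interpret fs: finite_measure_subalgebra Px F
    by unfold_locales (rule sub)
  have z: "(\<lambda>x. ennreal (- d x)) = (\<lambda>x. 0)"
    using d_nonneg by (auto intro!: ext ennreal_neg)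
  have "AE x in Px. (\<lambda>x. 0) x = nn_cond_exp Px F (\<lambda>x. 0) x"
    by (rule fs.nn_cond_exp_F_meas) simp
  then have "AE x in Px. enn2real (nn_cond_exp Px F (\<lambda>x. ennreal (d x)) x) = \<delta>"
    using cond unfolding F_def[symmetric] real_cond_exp_def z
    by eventually_elim (metis diff_zero enn2real_0)
  then have AEc: "AE x in Px. nn_cond_exp Px F (\<lambda>x. ennreal (d x)) x = ennreal \<delta>"
  proof eventually_elim
    case (elim x)
    then show ?case using delta
      by (metis enn2real_eq_0_iff ennreal_enn2real_if less_irrefl)
  qed
  have pm: "(\<lambda>x. \<psi> (outerp x x)) \<in> borel_measurable F"
    unfolding F_def
    by (rule measurable_compose[OF measurable_vimage_algebra1 psi]) simp
  have "(\<integral>\<^sup>+ x. ennreal (d x) * \<psi> (outerp x x) \<partial>Px) = (\<integral>\<^sup>+ x. \<psi> (outerp x x) * ennreal (d x) \<partial>Px)"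
    by (simp add: mult.commute)
  also have "\<dots> = (\<integral>\<^sup>+ x. \<psi> (outerp x x) * nn_cond_exp Px F (\<lambda>x. ennreal (d x)) x \<partial>Px)"
    by (rule fs.nn_cond_exp_intg[symmetric]) (use pm in auto)
  also have "\<dots> = (\<integral>\<^sup>+ x. ennreal \<delta> * \<psi> (outerp x x) \<partial>Px)"
    by (rule nn_integral_cong_AE) (use AEc in \<open>auto simp: mult.commute\<close>)
  also have "\<dots> = ennreal \<delta> * (\<integral>\<^sup>+ x. \<psi> (outerp x x) \<partial>Px)"
    by (rule nn_integral_cmult) (use om psi in measurable)
  finally show ?thesis .
qed


lemma prod_key:
  fixes Px :: "(real^'p) measure" and d :: "real^'p \<Rightarrow> real"
    and \<phi> :: "real^'p^'p \<Rightarrow> ('n::finite \<Rightarrow> real^'p) \<Rightarrow> ennreal"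
    and f :: "('n \<Rightarrow> real^'p) \<Rightarrow> ennreal" and i :: 'n
  assumes Px_prob: "prob_space Px" and Px_sets: "sets Px = sets borel"
    and d_meas: "d \<in> borel_measurable borel" and d_nonneg: "\<And>x. d x \<ge> 0"
    and cond: "AE x in Px. real_cond_exp Px (vimage_algebra (space Px) (\<lambda>x. outerp x x) borel) d x = \<delta>"
    and delta: "\<delta> > 0"
    and phi: "\<And>c. (\<lambda>Q. \<phi> Q c) \<in> borel_measurable borel"
    and f_eq: "\<And>w. f w = \<phi> (outerp (w i) (w i)) (w(i:=0))"
    and fm: "f \<in> borel_measurable (sampleM Px :: ('n \<Rightarrow> real^'p) measure)"
  shows "(\<integral>\<^sup>+ w. ennreal (d (w i)) * f w \<partial>(sampleM Px :: ('n \<Rightarrow> real^'p) measure))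
         = ennreal \<delta> * (\<integral>\<^sup>+ w. f w \<partial>(sampleM Px :: ('n \<Rightarrow> real^'p) measure))"
proof -
  interpret Px: prob_space Px by (rule Px_prob)
  interpret P: product_sigma_finite "\<lambda>_::'n. Px"
    by unfold_locales
  define I where "I = UNIV - {i}"
  have UI: "(UNIV :: 'n set) = insert i I" "finite I" "i \<notin> I" unfolding I_def by auto
  have SM: "(sampleM Px :: ('n \<Rightarrow> real^'p) measure) = PiM (insert i I) (\<lambda>_. Px)"
    unfolding sampleM_def using UI by simp
  have dm[measurable]: "d \<in> borel_measurable Px"
    using measurable_cong_sets[OF Px_sets refl] d_meas by blast
  have fm'[measurable]: "f \<in> borel_measurable (PiM (insert i I) (\<lambda>_. Px))" using fm SM by simp
  have gm: "(\<lambda>w. ennreal (d (w i)) * f w) \<in> borel_measurable (PiM (insert i I) (\<lambda>_. Px))"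
    by measurable
  have inner: "(\<integral>\<^sup>+ y. ennreal (d ((x(i:=y)) i)) * f (x(i:=y)) \<partial>Px) = ennreal \<delta> * (\<integral>\<^sup>+ y. f (x(i:=y)) \<partial>Px)"
    for x :: "'n \<Rightarrow> real^'p"
  proof -
    have "(\<integral>\<^sup>+ y. ennreal (d ((x(i:=y)) i)) * f (x(i:=y)) \<partial>Px)
        = (\<integral>\<^sup>+ y. ennreal (d y) * (\<lambda>Q. \<phi> Q (x(i:=0))) (outerp y y) \<partial>Px)"
      by (simp add: f_eq)
    also have "\<dots> = ennreal \<delta> * (\<integral>\<^sup>+ y. (\<lambda>Q. \<phi> Q (x(i:=0))) (outerp y y) \<partial>Px)"
      by (rule px_key[OF Px_prob Px_sets d_meas d_nonneg cond delta phi])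
    also have "\<dots> = ennreal \<delta> * (\<integral>\<^sup>+ y. f (x(i:=y)) \<partial>Px)"
      by (simp add: f_eq)
    finally show ?thesis .
  qed
  have Gm: "(\<lambda>x. \<integral>\<^sup>+ y. f (x(i:=y)) \<partial>Px) \<in> borel_measurable (PiM I (\<lambda>_. Px))"
  proof (rule Px.borel_measurable_nn_integral)
    show "(\<lambda>(x, y). f (x(i := y))) \<in> borel_measurable (Pi\<^sub>M I (\<lambda>_. Px) \<Otimes>\<^sub>M Px)"
      using measurable_comp[OF measurable_add_dim[of i I "\<lambda>_. Px"] fm'] by (simp add: comp_def case_prod_beta')
  qed
  have "(\<integral>\<^sup>+ w. ennreal (d (w i)) * f w \<partial>(sampleM Px :: ('n \<Rightarrow> real^'p) measure))
      = (\<integral>\<^sup>+ x. (\<integral>\<^sup>+ y. ennreal (d ((x(i:=y)) i)) * f (x(i:=y)) \<partial>Px) \<partial>PiM I (\<lambda>_. Px))"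
    unfolding SM by (rule P.product_nn_integral_insert[OF UI(2,3) gm])
  also have "\<dots> = (\<integral>\<^sup>+ x. ennreal \<delta> * (\<integral>\<^sup>+ y. f (x(i:=y)) \<partial>Px) \<partial>PiM I (\<lambda>_. Px))"
    using inner by presburger
  also have "\<dots> = ennreal \<delta> * (\<integral>\<^sup>+ x. (\<integral>\<^sup>+ y. f (x(i:=y)) \<partial>Px) \<partial>PiM I (\<lambda>_. Px))"
    by (rule nn_integral_cmult[OF Gm])
  also have "\<dots> = ennreal \<delta> * (\<integral>\<^sup>+ w. f w \<partial>(sampleM Px :: ('n \<Rightarrow> real^'p) measure))"
    unfolding SM by (subst P.product_nn_integral_insert[OF UI(2,3) fm']) simp
  finally show ?thesis .
qed



lemma mm_sub_rdistrib: "((A::real^'n^'m) - B) ** (C::real^'p^'n) = A ** C - B ** C"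
  by (vector matrix_matrix_mult_def sum_subtractf left_diff_distrib)
lemma mm_sub_ldistrib: "(A::real^'n^'m) ** ((B::real^'p^'n) - C) = A ** B - A ** C"
  by (vector matrix_matrix_mult_def sum_subtractf right_diff_distrib)
lemma mm_add_rdistrib: "((A::real^'n^'m) + B) ** (C::real^'p^'n) = A ** C + B ** C"
  by (vector matrix_matrix_mult_def sum.distrib distrib_right)
lemma mm_scaleR_left: "(k *\<^sub>R (A::real^'n^'m)) ** (B::real^'p^'n) = k *\<^sub>R (A ** B)"
  by (simp add: scalar_matrix_assoc)
lemma mm_scaleR_right: "(A::real^'n^'m) ** (k *\<^sub>R (B::real^'p^'n)) = k *\<^sub>R (A ** B)"
  by (simp add: matrix_matrix_mult_def sum_distrib_left mult_ac vec_eq_iff)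
lemma trace_scaleR: "trace (k *\<^sub>R (A::real^'n^'n)) = k * trace A"
  by (simp add: trace_def sum_distrib_left)

lemma mat1_scaleR: "(mat 1 :: real^'n^'n) ** A = A" by simp

lemma trace_outer: "trace ((M::real^'n^'n) ** outerp x x) = x \<bullet> (M *v x)"
  by (simp add: trace_def matrix_matrix_mult_def outerp_def inner_vec_def matrix_vector_mult_def
      sum_distrib_left sum_distrib_right mult_ac)

lemma outer_mv: "outerp x y *v v = (y \<bullet> v) *\<^sub>R x"
  by (simp add: outerp_def matrix_vector_mult_def inner_vec_def vec_eq_iff sum_distrib_left mult_ac)

definition psd :: "real^'n^'n \<Rightarrow> bool" where "psd M \<longleftrightarrow> (\<forall>v. 0 \<le> v \<bullet> (M *v v))"

lemma trace_PtQP_nonneg: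
  fixes P :: "real^'m^'n" and Q :: "real^'n^'n"
  assumes "psd Q"
  shows "0 \<le> trace (transpose P ** Q ** P)"
proof -
  have "trace (transpose P ** Q ** P) = (\<Sum>j\<in>UNIV. column j P \<bullet> (Q *v column j P))"
    by (simp add: trace_def matrix_matrix_mult_def transpose_def column_def inner_vec_def
        matrix_vector_mult_def sum_distrib_left sum_distrib_right mult_ac)
      (rule sum.cong[OF refl], subst sum.swap, simp add: mult_ac)
  also have "\<dots> \<ge> 0" using assms unfolding psd_def by (intro sum_nonneg) auto
  finally show ?thesis .
qed

lemma inv_props:
  fixes M :: "real^'n^'n"
  assumes "invertible M"
  shows "M ** matrix_inv M = mat 1" "matrix_inv M ** M = mat 1"
proof -
  have "\<exists>A'. M ** A' = mat 1 \<and> A' ** M = mat 1" using assms unfolding invertible_def by blast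
  then have "M ** matrix_inv M = mat 1 \<and> matrix_inv M ** M = mat 1"
    unfolding matrix_inv_def by (rule someI_ex)
  then show "M ** matrix_inv M = mat 1" "matrix_inv M ** M = mat 1" by auto
qed

lemma inv_sym:
  fixes M :: "real^'n^'n"
  assumes "invertible M" "transpose M = M"
  shows "transpose (matrix_inv M) = matrix_inv M"
proof -
  have "transpose (matrix_inv M) ** M = mat 1"
    using inv_props(1)[OF assms(1)] assms(2) by (metis matrix_transpose_mul transpose_mat)
  then have "transpose (matrix_inv M) = transpose (matrix_inv M) ** (M ** matrix_inv M)"
    using inv_props(1)[OF assms(1)] by simp
  also have "\<dots> = matrix_inv M"
    by (simp add: matrix_mul_assoc \<open>transpose (matrix_inv M) ** M = mat 1\<close>)
  finally show ?thesis .
qed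

lemma inv_psd:
  fixes M :: "real^'n^'n"
  assumes "invertible M" "psd M"
  shows "psd (matrix_inv M)"
  unfolding psd_def
proof
  fix v
  define u where "u = matrix_inv M *v v"
  have v: "v = M *v u"
    unfolding u_def matrix_vector_mul_assoc inv_props(1)[OF assms(1)] by simp
  have "v \<bullet> (matrix_inv M *v v) = u \<bullet> (M *v u)"
    by (simp add: v[symmetric] u_def[symmetric] inner_commute)
  then show "0 \<le> v \<bullet> (matrix_inv M *v v)" using assms(2) unfolding psd_def by simp
qed

lemma inv_unique:
  fixes M :: "real^'n^'n"
  assumes "M ** B = mat 1"
  shows "matrix_inv M = B" "invertible M"
proof -
  have "B ** M = mat 1" using assms matrix_left_right_inverse by blast
  then show inv: "invertible M" using assms unfolding invertible_def by blast
  have "matrix_inv M = matrix_inv M ** (M ** B)" using assms by simp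
  also have "\<dots> = B" by (simp add: matrix_mul_assoc inv_props(2)[OF inv])
  finally show "matrix_inv M = B" .
qed

lemma sum_mv: "(\<Sum>i\<in>S. (M i :: real^'n^'m)) *v v = (\<Sum>i\<in>S. M i *v v)"
  by (induction S rule: infinite_finite_induct) (auto simp: matrix_vector_mult_add_rdistrib)

lemma scaleR_mv: "(c *\<^sub>R (M :: real^'n^'m)) *v v = c *\<^sub>R (M *v v)"
  by (simp add: matrix_vector_mult_def vec_eq_iff sum_distrib_left mult_ac)

lemma XtX_sum: "XtX w = (\<Sum>i\<in>UNIV. outerp (w i) (w i))"
  by (simp add: XtX_def Xmat_def outerp_def matrix_matrix_mult_def transpose_def vec_eq_iff sum_component)

lemma XtDX_sum: "XtDX g \<beta> w = (\<Sum>i\<in>UNIV. deriv g (w i \<bullet> \<beta>) *\<^sub>R outerp (w i) (w i))"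
  by (simp add: XtDX_def Xmat_def Dmat_def outerp_def matrix_matrix_mult_def transpose_def vec_eq_iff
      sum_component if_distrib if_distribR sum.delta' mult_ac cong: if_cong)

lemma XtX_mv: "XtX w *v v = (\<Sum>i\<in>UNIV. (w i \<bullet> v) *\<^sub>R w i)"
  by (simp add: XtX_sum sum_mv outer_mv)

lemma XtDX_mv: "XtDX g \<beta> w *v v = (\<Sum>i\<in>UNIV. (deriv g (w i \<bullet> \<beta>) * (w i \<bullet> v)) *\<^sub>R w i)"
  by (simp add: XtDX_sum sum_mv outer_mv scaleR_mv)

lemma XtX_qf: "v \<bullet> (XtX w *v v) = (\<Sum>i\<in>UNIV. (w i \<bullet> v)^2)"
  by (simp add: XtX_mv inner_sum_right power2_eq_square inner_commute)

lemma XtDX_qf: "v \<bullet> (XtDX g \<beta> w *v v) = (\<Sum>i\<in>UNIV. deriv g (w i \<bullet> \<beta>) * (w i \<bullet> v)^2)"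
  by (simp add: XtDX_mv inner_sum_right power2_eq_square inner_commute mult_ac)

lemma XtX_psd: "psd (XtX w)"
  unfolding psd_def XtX_qf by (auto intro!: sum_nonneg)

lemma XtDX_psd: "(\<And>t. deriv g t \<ge> 0) \<Longrightarrow> psd (XtDX g \<beta> w)"
  unfolding psd_def XtDX_qf by (auto intro!: sum_nonneg)

lemma XtX_sym: "transpose (XtX w) = XtX w"
  by (simp add: XtX_def matrix_transpose_mul)

lemma Dmat_sym: "transpose (Dmat g \<beta> w) = Dmat g \<beta> w"
  by (simp add: Dmat_def transpose_def vec_eq_iff)

lemma XtDX_sym: "transpose (XtDX g \<beta> w) = XtDX g \<beta> w"
  by (simp add: XtDX_def matrix_transpose_mul Dmat_sym matrix_mul_assoc)

lemma XtX_eq: "XtX w = transpose (Xmat w) ** Xmat w" by (simp add: XtX_def)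

lemma inv_XtDX_imp_XtX:
  assumes "invertible (XtDX g \<beta> w)"
  shows "invertible (XtX w)"
proof -
  have "\<forall>v. XtX w *v v = 0 \<longrightarrow> v = 0"
  proof (intro allI impI)
    fix v assume h: "XtX w *v v = 0"
    then have "(\<Sum>i\<in>UNIV. (w i \<bullet> v)^2) = 0" using XtX_qf[of v w] by simp
    then have z: "\<forall>i\<in>UNIV. (w i \<bullet> v)^2 = 0" by (subst sum_nonneg_eq_0_iff[symmetric]) auto
    have "XtDX g \<beta> w *v v = 0" unfolding XtDX_mv using z by simp
    then have "matrix_inv (XtDX g \<beta> w) *v (XtDX g \<beta> w *v v) = 0" by simp
    then show "v = 0" by (simp add: matrix_vector_mul_assoc inv_props(2)[OF assms])
  qed
  then show ?thesis
    using matrix_left_invertible_ker invertible_left_inverse by blast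
qed

lemma trace_cyc3: "trace ((A::real^'n^'n) ** B ** C) = trace (C ** A ** B)"
  by (metis matrix_mul_assoc trace_mul_sym)

lemma trace_two_mat: "trace ((2::real^'n^'n) * mat 1) = 2 * real CARD('n)"
  by (simp add: trace_def mat_def)

lemma step5_pw:
  fixes X :: "real^'p^'n" and Ai Hi H :: "real^'p^'p"
  assumes sA: "transpose Ai = Ai" and sH: "transpose Hi = Hi" and pH: "psd H"
    and HH: "Hi ** H = mat 1" "H ** Hi = mat 1"
  shows "0 \<le> trace (Ai ** (transpose X ** X) ** Ai ** H) - 2 * t * trace ((transpose X ** X) ** Ai)
              + t^2 * trace (Hi ** (transpose X ** X))"
proof -
  define C where "C = transpose X ** X"
  define S where "S = Ai - t *\<^sub>R Hi"
  have sS: "transpose S = S" unfolding S_def using sA sH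
    by (simp add: transpose_def vec_eq_iff)
  define P where "P = S ** transpose X"
  have tP: "transpose P = X ** S" unfolding P_def by (simp add: matrix_transpose_mul sS)
  have "0 \<le> trace (transpose P ** H ** P)" by (rule trace_PtQP_nonneg[OF pH])
  also have "trace (transpose P ** H ** P) = trace (S ** C ** S ** H)"
  proof -
    have "trace (transpose P ** H ** P) = trace (X ** S ** H ** (S ** transpose X))"
      unfolding tP by (simp add: P_def)
    also have "\<dots> = trace ((X ** (S ** H ** S)) ** transpose X)"
      by (simp add: matrix_mul_assoc)
    also have "\<dots> = trace (transpose X ** (X ** (S ** H ** S)))" by (rule trace_mul_sym)
    also have "\<dots> = trace ((C ** S ** H) ** S)" unfolding C_def by (simp add: matrix_mul_assoc)
    also have "\<dots> = trace (S ** (C ** S ** H))" by (rule trace_mul_sym)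
    also have "\<dots> = trace (S ** C ** S ** H)" by (simp add: matrix_mul_assoc)
    finally show ?thesis .
  qed
  also have "S ** C ** S ** H = Ai ** C ** Ai ** H - t *\<^sub>R (Ai ** C ** Hi ** H)
         - t *\<^sub>R (Hi ** C ** Ai ** H) + (t * t) *\<^sub>R (Hi ** C ** Hi ** H)"
    unfolding S_def by (simp add: mm_sub_rdistrib mm_sub_ldistrib mm_scaleR_left mm_scaleR_right
       mm_add_rdistrib matrix_add_ldistrib algebra_simps)
  also have "trace \<dots> = trace (Ai ** C ** Ai ** H) - 2 * t * trace (C ** Ai) + t^2 * trace (Hi ** C)"
  proof -
    have e1: "trace (Ai ** C ** Hi ** H) = trace (C ** Ai)"
      by (metis HH(1) matrix_mul_assoc matrix_mul_rid trace_mul_sym)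
    have e2: "trace (Hi ** C ** Ai ** H) = trace (C ** Ai)"
      by (metis HH(2) matrix_mul_assoc matrix_mul_lid trace_mul_sym)
    have e3: "Hi ** C ** Hi ** H = Hi ** C"
      by (metis HH(1) matrix_mul_assoc matrix_mul_rid)
    show ?thesis by (simp add: trace_add trace_sub trace_scaleR e1 e2 e3 power2_eq_square)
  qed
  finally show ?thesis unfolding C_def .
qed

lemma step6_pw:
  fixes X :: "real^'p^'n" and A Ai Ci :: "real^'p^'p"
  assumes sA: "transpose A = A" and pA: "psd Ai"
    and AA: "Ai ** A = mat 1" "A ** Ai = mat 1"
    and CC: "Ci ** (transpose X ** X) = mat 1" "(transpose X ** X) ** Ci = mat 1"
    and sAi: "transpose Ai = Ai" and sCi: "transpose Ci = Ci"
  shows "0 \<le> \<delta>^2 * trace ((transpose X ** X) ** Ai) + trace (Ci ** A) - 2 * \<delta> * real CARD('p)"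
proof -
  define C where "C = transpose X ** X"
  have sC: "transpose C = C" unfolding C_def by (simp add: matrix_transpose_mul)
  define Y where "Y = A - \<delta> *\<^sub>R C"
  have sY: "transpose Y = Y" unfolding Y_def using sA sC
    by (simp add: transpose_def vec_eq_iff)
  define P where "P = Y ** Ci ** transpose X"
  have tP: "transpose P = X ** Ci ** Y" unfolding P_def
    by (simp add: matrix_transpose_mul sY sCi matrix_mul_assoc)
  have "0 \<le> trace (transpose P ** Ai ** P)" by (rule trace_PtQP_nonneg[OF pA])
  also have "trace (transpose P ** Ai ** P) = trace (Ci ** Y ** Ai ** Y)"
  proof -
    have "trace (transpose P ** Ai ** P) = trace (X ** Ci ** Y ** Ai ** (Y ** Ci ** transpose X))"
      unfolding tP by (simp add: P_def)
    also have "\<dots> = trace ((X ** (Ci ** Y ** Ai ** Y ** Ci)) ** transpose X)"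
      by (simp add: matrix_mul_assoc)
    also have "\<dots> = trace (transpose X ** (X ** (Ci ** Y ** Ai ** Y ** Ci)))" by (rule trace_mul_sym)
    also have "\<dots> = trace ((C ** Ci ** Y ** Ai ** Y) ** Ci)" unfolding C_def by (simp add: matrix_mul_assoc)
    also have "\<dots> = trace (Ci ** (C ** Ci ** Y ** Ai ** Y))" by (rule trace_mul_sym)
    also have "\<dots> = trace ((Ci ** C) ** Ci ** Y ** Ai ** Y)" by (simp add: matrix_mul_assoc)
    also have "\<dots> = trace (Ci ** Y ** Ai ** Y)" using CC(1) unfolding C_def by simp
    finally show ?thesis .
  qed
  also have "Ci ** Y ** Ai ** Y = Ci ** A ** Ai ** A - \<delta> *\<^sub>R (Ci ** A ** Ai ** C)
         - \<delta> *\<^sub>R (Ci ** C ** Ai ** A) + (\<delta> * \<delta>) *\<^sub>R (Ci ** C ** Ai ** C)"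
    unfolding Y_def by (simp add: mm_sub_rdistrib mm_sub_ldistrib mm_scaleR_left mm_scaleR_right
       mm_add_rdistrib matrix_add_ldistrib algebra_simps)
  also have "trace \<dots> = trace (Ci ** A) - 2 * \<delta> * real CARD('p) + \<delta>^2 * trace (C ** Ai)"
  proof -
    have e1: "Ci ** A ** Ai ** A = Ci ** A"
      by (metis AA(1) matrix_mul_assoc matrix_mul_rid)
    have e2: "Ci ** A ** Ai ** C = mat 1"
      by (metis AA(2) CC(1) C_def matrix_mul_assoc matrix_mul_rid)
    have e3: "Ci ** C ** Ai ** A = mat 1"
      by (metis AA(1) CC(1) C_def matrix_mul_assoc matrix_mul_rid)
    have e4: "trace (Ci ** C ** Ai ** C) = trace (C ** Ai)"
      by (metis CC(1) C_def matrix_mul_assoc matrix_mul_lid trace_mul_sym)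
    show ?thesis by (simp add: trace_add trace_sub trace_scaleR e1 e2 e3 e4 power2_eq_square trace_I trace_two_mat)
  qed
  finally show ?thesis unfolding C_def by simp
qed




lemma bl_qf: "bounded_linear (\<lambda>M::real^'p^'p. v \<bullet> (M *v v))"
  by (subst linear_conv_bounded_linear[symmetric])
     (auto intro!: linearI simp: matrix_vector_mult_add_rdistrib scaleR_mv inner_add_right)

lemma bl_entry: "bounded_linear (\<lambda>M::real^'n^'m. M $ j $ k)"
  by (rule bounded_linear_compose[OF bounded_linear_vec_nth[of k] bounded_linear_vec_nth[of j]])

lemma bl_trace: "bounded_linear (trace :: real^'n^'n \<Rightarrow> real)"
  by (subst linear_conv_bounded_linear[symmetric])
     (auto intro!: linearI simp: trace_add trace_scaleR)

lemma bl_trace_r: "bounded_linear (\<lambda>M::real^'n^'n. trace (M ** H))"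
  by (subst linear_conv_bounded_linear[symmetric])
     (auto intro!: linearI simp: trace_add trace_scaleR mm_add_rdistrib mm_scaleR_left)

lemma bl_trace_l: "bounded_linear (\<lambda>M::real^'n^'n. trace (H ** M))"
  by (subst linear_conv_bounded_linear[symmetric])
     (auto intro!: linearI simp: trace_add trace_scaleR matrix_add_ldistrib mm_scaleR_right)

lemma bl_transpose: "bounded_linear (transpose :: real^'n^'m \<Rightarrow> real^'m^'n)"
  by (subst linear_conv_bounded_linear[symmetric])
     (auto intro!: linearI simp: transpose_def vec_eq_iff)

lemma entry_qf: "axis j 1 \<bullet> ((S::real^'p^'p) *v axis k 1) = S $ j $ k"
  by (simp add: inner_vec_def matrix_vector_mult_def axis_def if_distrib if_distribR cong: if_cong)

lemma sym_qf_zero: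
  fixes S :: "real^'p^'p"
  assumes "transpose S = S" "\<And>v. v \<bullet> (S *v v) = 0"
  shows "S = 0"
proof -
  have "S $ j $ k = 0" for j k
  proof -
    let ?u = "axis j 1 :: real^'p" and ?w = "axis k 1 :: real^'p"
    have "0 = (?u + ?w) \<bullet> (S *v (?u + ?w))" using assms(2) by simp
    also have "\<dots> = ?u \<bullet> (S *v ?u) + ?u \<bullet> (S *v ?w) + ?w \<bullet> (S *v ?u) + ?w \<bullet> (S *v ?w)"
      by (simp add: matrix_vector_right_distrib inner_add_left inner_add_right)
    also have "\<dots> = S $ j $ k + S $ k $ j" using assms(2) by (simp add: entry_qf)
    also have "S $ k $ j = S $ j $ k" using assms(1) by (metis transpose_def vec_lambda_beta)
    finally show ?thesis by simp
  qed
  then show ?thesis by (simp add: vec_eq_iff)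
qed

lemma mm_sum_right: "(M::real^'n^'m) ** (\<Sum>i\<in>S. N i :: real^'k^'n) = (\<Sum>i\<in>S. M ** N i)"
  by (induction S rule: infinite_finite_induct) (auto simp: matrix_add_ldistrib)

lemma trace_sum: "trace (\<Sum>i\<in>S. N i :: real^'n^'n) = (\<Sum>i\<in>S. trace (N i))"
  by (induction S rule: infinite_finite_induct) (auto simp: trace_add trace_0[simplified])

lemma XtX_split: "XtX w = outerp (w i) (w i) + XtX (w(i:=0))"
proof -
  have "XtX w = outerp (w i) (w i) + (\<Sum>l\<in>UNIV - {i}. outerp (w l) (w l))"
    unfolding XtX_sum by (simp add: sum.remove[of UNIV i])
  moreover have "XtX (w(i:=0)) = (\<Sum>l\<in>UNIV - {i}. outerp (w l) (w l))"
    unfolding XtX_sum by (simp add: sum.remove[of UNIV i] outerp_def zero_vec_def)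
  ultimately show ?thesis by simp
qed

lemma minv_zero: "det C = 0 \<Longrightarrow> minv C = 0"
  by (simp add: minv_def vec_eq_iff)

definition fi :: "'n \<Rightarrow> ('n::finite \<Rightarrow> real^'p) \<Rightarrow> real" where
  "fi i w = trace (minv (XtX w) ** outerp (w i) (w i))"

lemma fi_bounds: "0 \<le> fi i w \<and> fi i w \<le> 1"
proof (cases "det (XtX w) = 0")
  case True then show ?thesis by (simp add: fi_def minv_zero trace_def)
next
  case False
  define x where "x = w i"
  define u where "u = matrix_inv (XtX w) *v x"
  have inv: "invertible (XtX w)" using False invertible_det_nz by blast
  have Cu: "XtX w *v u = x" unfolding u_def by (simp add: matrix_vector_mul_assoc inv_props(1)[OF inv])
  have f: "fi i w = x \<bullet> u" unfolding fi_def minv_eq[OF False] trace_outer u_def x_def by simp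
  have "u \<bullet> (XtX w *v u) = x \<bullet> u" by (simp add: Cu inner_commute)
  moreover have "u \<bullet> (XtX w *v u) = (\<Sum>l\<in>UNIV. (w l \<bullet> u)^2)" by (rule XtX_qf)
  moreover have "(\<Sum>l\<in>UNIV. (w l \<bullet> u)^2) \<ge> (w i \<bullet> u)^2"
    by (rule member_le_sum) auto
  moreover have "(\<Sum>l\<in>UNIV. (w l \<bullet> u)^2) \<ge> 0" by (rule sum_nonneg) auto
  ultimately have "x \<bullet> u \<ge> (x \<bullet> u)^2" "x \<bullet> u \<ge> 0" unfolding x_def by auto
  then have "x \<bullet> u \<le> 1"
  proof -
    assume h: "x \<bullet> u \<ge> (x \<bullet> u)^2" "x \<bullet> u \<ge> 0"
    show ?thesis
    proof (rule ccontr)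
      assume "\<not> x \<bullet> u \<le> 1"
      then have "(x \<bullet> u) * 1 < (x \<bullet> u) * (x \<bullet> u)" by (intro mult_strict_left_mono) auto
      then show False using h(1) by (simp add: power2_eq_square)
    qed
  qed
  then show ?thesis using f \<open>x \<bullet> u \<ge> 0\<close> by simp
qed

lemma fi_sum:
  fixes w :: "'n::finite \<Rightarrow> real^'p"
  assumes "det (XtX w) \<noteq> 0"
  shows "(\<Sum>i\<in>UNIV. fi i w) = real CARD('p)"
proof -
  have "(\<Sum>i\<in>UNIV. fi i w) = (\<Sum>i\<in>UNIV. trace (matrix_inv (XtX w) ** outerp (w i) (w i)))"
    unfolding fi_def minv_eq[OF assms] ..
  also have "\<dots> = trace (matrix_inv (XtX w) ** (\<Sum>i\<in>UNIV. outerp (w i) (w i)))"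
    by (simp add: mm_sum_right trace_sum)
  also have "\<dots> = trace (matrix_inv (XtX w) ** XtX w)" by (simp only: XtX_sum[of w])
  also have "\<dots> = real CARD('p)"
  proof -
    have inv: "invertible (XtX w)" using assms invertible_det_nz by blast
    show ?thesis by (simp add: inv_props(2)[OF inv] trace_I)
  qed
  finally show ?thesis .
qed

lemma fi_A:
  assumes "det (XtX w) \<noteq> 0"
  shows "trace (matrix_inv (XtX w) ** XtDX g \<beta> w) = (\<Sum>i\<in>UNIV. deriv g (w i \<bullet> \<beta>) * fi i w)"
proof -
  have "trace (matrix_inv (XtX w) ** XtDX g \<beta> w) = trace (matrix_inv (XtX w) ** (\<Sum>i\<in>UNIV. deriv g (w i \<bullet> \<beta>) *\<^sub>R outerp (w i) (w i)))"
    by (simp only: XtDX_sum)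
  also have "\<dots> = (\<Sum>i\<in>UNIV. deriv g (w i \<bullet> \<beta>) * trace (matrix_inv (XtX w) ** outerp (w i) (w i)))"
    by (simp add: mm_sum_right trace_sum mm_scaleR_right trace_scaleR)
  finally show ?thesis unfolding fi_def minv_eq[OF assms] .
qed

lemma fi_phi: "fi i w = trace (minv (outerp (w i) (w i) + XtX (w(i:=0))) ** outerp (w i) (w i))"
  unfolding fi_def using XtX_split[of w i] by simp




lemma final_alg:
  fixes L U S B \<sigma> q k s :: real
  assumes q: "q > 0" and k: "0 < k" "k < 1" and sig: "\<sigma> > 0" and B: "B \<ge> 0"
    and U: "U = k * q" and S: "S = k * s" and s: "s \<ge> q"
    and Lt: "\<And>t. 0 \<le> L - 2 * t * s + t^2 * q"
  shows "L + U - 2 * S > 0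
     \<and> (let a = \<sigma> * (L - S) / (B + \<sigma> * (L + U - 2 * S))
        in (\<forall>b. a^2 * B + \<sigma> * (a^2 * U + (1 - a)^2 * L + 2 * a * (1 - a) * S)
                 \<le> b^2 * B + \<sigma> * (b^2 * U + (1 - b)^2 * L + 2 * b * (1 - b) * S))
           \<and> (\<forall>c. (\<forall>b. c^2 * B + \<sigma> * (c^2 * U + (1 - c)^2 * L + 2 * c * (1 - c) * S)
                 \<le> b^2 * B + \<sigma> * (b^2 * U + (1 - b)^2 * L + 2 * b * (1 - b) * S)) \<longrightarrow> c = a)
           \<and> a > 0
           \<and> a^2 * B + \<sigma> * (a^2 * U + (1 - a)^2 * L + 2 * a * (1 - a) * S) = \<sigma> * L
               - \<sigma>^2 * (L - S)^2 / (B + \<sigma> * (L + U - 2 * S)))"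
proof -
  have L1: "L \<ge> 2 * k * s - k^2 * q" using Lt[of k] by simp
  have pos1: "L + U - 2 * S > 0"
  proof -
    have "L + U - 2 * S \<ge> k * q - k^2 * q" using L1 U S by simp
    moreover have "k * q - k^2 * q = k * (1 - k) * q" by (simp add: power2_eq_square algebra_simps)
    moreover have "k * (1 - k) * q > 0" using k q by simp
    ultimately show ?thesis by linarith
  qed
  have L2: "L \<ge> s^2 / q"
  proof -
    have "0 \<le> L - 2 * (s / q) * s + (s / q)^2 * q" by (rule Lt)
    moreover have "2 * (s / q) * s - (s / q)^2 * q = s^2 / q" using q by (simp add: power2_eq_square field_simps)
    ultimately show ?thesis by linarith
  qed
  have "s^2 / q \<ge> s" using s q by (simp add: power2_eq_square field_simps mult_right_mono)
  moreover have "s > k * s" using s q k by (simp add: mult_less_cancel_right1)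
  ultimately have LS: "L - S > 0" using L2 S by linarith
  define Den where "Den = B + \<sigma> * (L + U - 2 * S)"
  have Den: "Den > 0" unfolding Den_def using B sig pos1 by (simp add: add_nonneg_pos)
  define a where "a = \<sigma> * (L - S) / Den"
  have r: "b^2 * B + \<sigma> * (b^2 * U + (1 - b)^2 * L + 2 * b * (1 - b) * S)
        = Den * (b - a)^2 + (\<sigma> * L - \<sigma>^2 * (L - S)^2 / Den)" for b
  proof -
    have e1: "b^2 * B + \<sigma> * (b^2 * U + (1 - b)^2 * L + 2 * b * (1 - b) * S)
        = Den * b^2 - 2 * (\<sigma> * (L - S)) * b + \<sigma> * L"
      unfolding Den_def by (simp add: power2_eq_square algebra_simps)
    have e2: "Den * a = \<sigma> * (L - S)" unfolding a_def using Den by simp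
    have e3: "Den * a^2 = (Den * a) * (Den * a) / Den" using Den by (simp add: power2_eq_square)
    have "Den * (b - a)^2 = Den * b^2 - 2 * (Den * a) * b + Den * a^2"
      by (simp add: power2_eq_square algebra_simps)
    then have "Den * (b - a)^2 = Den * b^2 - 2 * (\<sigma> * (L - S)) * b + \<sigma>^2 * (L - S)^2 / Den"
      unfolding e3 e2 by (simp add: power2_eq_square algebra_simps)
    then show ?thesis unfolding e1 by simp
  qed
  have apos: "a > 0" unfolding a_def using sig LS Den by simp
  have min: "\<forall>b. a^2 * B + \<sigma> * (a^2 * U + (1 - a)^2 * L + 2 * a * (1 - a) * S)
                 \<le> b^2 * B + \<sigma> * (b^2 * U + (1 - b)^2 * L + 2 * b * (1 - b) * S)"
    unfolding r using Den by simp
  have uniq: "\<forall>c. (\<forall>b. c^2 * B + \<sigma> * (c^2 * U + (1 - c)^2 * L + 2 * c * (1 - c) * S)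
                 \<le> b^2 * B + \<sigma> * (b^2 * U + (1 - b)^2 * L + 2 * b * (1 - b) * S)) \<longrightarrow> c = a"
  proof (intro allI impI)
    fix c assume "\<forall>b. c^2 * B + \<sigma> * (c^2 * U + (1 - c)^2 * L + 2 * c * (1 - c) * S)
                 \<le> b^2 * B + \<sigma> * (b^2 * U + (1 - b)^2 * L + 2 * b * (1 - b) * S)"
    then have "Den * (c - a)^2 \<le> Den * (a - a)^2" unfolding r by (metis add_le_cancel_right)
    then have "Den * (c - a)^2 \<le> 0" by simp
    then have "(c - a)^2 \<le> 0" using Den by (simp add: mult_le_0_iff)
    then show "c = a" by simp
  qed
  have val: "a^2 * B + \<sigma> * (a^2 * U + (1 - a)^2 * L + 2 * a * (1 - a) * S) = \<sigma> * L
               - \<sigma>^2 * (L - S)^2 / Den"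
    unfolding r by simp
  show ?thesis using pos1 min uniq apos val unfolding Den_def a_def Let_def by blast
qed



lemma prod_key_real:
  fixes Px :: "(real^'p) measure" and d :: "real^'p \<Rightarrow> real"
    and \<psi> :: "real^'p^'p \<Rightarrow> ('n::finite \<Rightarrow> real^'p) \<Rightarrow> real"
    and f :: "('n \<Rightarrow> real^'p) \<Rightarrow> real" and i :: 'n
  assumes Px_prob: "prob_space Px" and Px_sets: "sets Px = sets borel"
    and d_meas: "d \<in> borel_measurable borel" and d_nonneg: "\<And>x. d x \<ge> 0"
    and cond: "AE x in Px. real_cond_exp Px (vimage_algebra (space Px) (\<lambda>x. outerp x x) borel) d x = \<delta>"
    and delta: "\<delta> > 0"
    and psi: "\<And>c. (\<lambda>Q. \<psi> Q c) \<in> borel_measurable borel"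
    and f_eq: "\<And>w. f w = \<psi> (outerp (w i) (w i)) (w(i:=0))"
    and f_nn: "\<And>w. f w \<ge> 0"
    and fm: "f \<in> borel_measurable (sampleM Px :: ('n \<Rightarrow> real^'p) measure)"
  shows "(\<integral> w. d (w i) * f w \<partial>(sampleM Px :: ('n \<Rightarrow> real^'p) measure))
         = \<delta> * (\<integral> w. f w \<partial>(sampleM Px :: ('n \<Rightarrow> real^'p) measure))"
proof -
  let ?M = "sampleM Px :: ('n \<Rightarrow> real^'p) measure"
  have ci: "(\<lambda>w. w i) \<in> measurable ?M borel"
  proof -
    have "(\<lambda>w. w i) \<in> measurable (PiM UNIV (\<lambda>_. Px)) Px" by (rule measurable_component_singleton) simp
    then show ?thesis unfolding sampleM_def by (simp add: measurable_cong_sets[OF refl Px_sets])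
  qed
  have dm: "(\<lambda>w. d (w i)) \<in> borel_measurable ?M"
    using measurable_compose[OF ci d_meas] .
  have key: "(\<integral>\<^sup>+ w. ennreal (d (w i)) * ennreal (f w) \<partial>?M) = ennreal \<delta> * (\<integral>\<^sup>+ w. ennreal (f w) \<partial>?M)"
  proof (rule prod_key[OF Px_prob Px_sets d_meas d_nonneg cond delta, where \<phi> = "\<lambda>Q c. ennreal (\<psi> Q c)"])
    show "(\<lambda>Q. ennreal (\<psi> Q c)) \<in> borel_measurable borel" for c using psi[of c] by measurable
    show "ennreal (f w) = ennreal (\<psi> (outerp (w i) (w i)) (w(i := 0)))" for w using f_eq by simp
    show "(\<lambda>w. ennreal (f w)) \<in> borel_measurable ?M" using fm by measurable
  qed
  have "(\<integral> w. d (w i) * f w \<partial>?M) = enn2real (\<integral>\<^sup>+ w. ennreal (d (w i) * f w) \<partial>?M)"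
    by (rule integral_eq_nn_integral) (use d_nonneg f_nn dm fm in auto)
  also have "\<dots> = enn2real (\<integral>\<^sup>+ w. ennreal (d (w i)) * ennreal (f w) \<partial>?M)"
    using d_nonneg f_nn by (simp add: ennreal_mult)
  also have "\<dots> = \<delta> * enn2real (\<integral>\<^sup>+ w. ennreal (f w) \<partial>?M)"
    unfolding key using delta by (simp add: enn2real_mult)
  also have "enn2real (\<integral>\<^sup>+ w. ennreal (f w) \<partial>?M) = (\<integral> w. f w \<partial>?M)"
    by (rule integral_eq_nn_integral[symmetric]) (use f_nn fm in auto)
  finally show ?thesis .
qed

lemma d_integrable:
  fixes Px :: "(real^'p) measure" and d :: "real^'p \<Rightarrow> real" and i :: "'n::finite"
  assumes Px_prob: "prob_space Px" and Px_sets: "sets Px = sets borel"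
    and d_meas: "d \<in> borel_measurable borel" and d_nonneg: "\<And>x. d x \<ge> 0"
    and cond: "AE x in Px. real_cond_exp Px (vimage_algebra (space Px) (\<lambda>x. outerp x x) borel) d x = \<delta>"
    and delta: "\<delta> > 0"
  shows "integrable (sampleM Px :: ('n \<Rightarrow> real^'p) measure) (\<lambda>w. d (w i))"
proof -
  let ?M = "sampleM Px :: ('n \<Rightarrow> real^'p) measure"
  interpret MP: prob_space ?M unfolding sampleM_def by (rule prob_space_PiM) (rule Px_prob)
  have ci: "(\<lambda>w. w i) \<in> measurable ?M borel"
  proof -
    have "(\<lambda>w. w i) \<in> measurable (PiM UNIV (\<lambda>_. Px)) Px" by (rule measurable_component_singleton) simp
    then show ?thesis unfolding sampleM_def by (simp add: measurable_cong_sets[OF refl Px_sets])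
  qed
  have dm: "(\<lambda>w. d (w i)) \<in> borel_measurable ?M"
    using measurable_compose[OF ci d_meas] .
  have key: "(\<integral>\<^sup>+ w. ennreal (d (w i)) * 1 \<partial>?M) = ennreal \<delta> * (\<integral>\<^sup>+ w. 1 \<partial>?M)"
    by (rule prod_key[OF Px_prob Px_sets d_meas d_nonneg cond delta, where \<phi> = "\<lambda>Q c. 1"]) auto
  then have "(\<integral>\<^sup>+ w. ennreal (d (w i)) \<partial>?M) < \<infinity>"
    by (simp add: MP.emeasure_space_1)
  then show ?thesis
    by (intro integrableI_nonneg dm) (auto simp: d_nonneg)
qed




theorem proposition2:
  fixes Px :: "(real^'p) measure" and g :: "real \<Rightarrow> real" and \<beta> :: "real^'p"
    and \<sigma>2 :: real and \<delta> :: real and N :: "'n::finite itself"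
  assumes p_lt_n: "CARD('p) < CARD('n)"
    and Px_prob: "prob_space Px" and Px_sets: "sets Px = sets borel"
    and mean0: "integrable Px (\<lambda>x. x)" "integral\<^sup>L Px (\<lambda>x. x) = 0"
    and g_mono: "mono g" and g_diff: "\<And>t. g differentiable (at t)"
    and sigma_pos: "\<sigma>2 > 0"
    and inv_as: "AE w in (sampleM Px :: ('n \<Rightarrow> real^'p) measure). invertible (XtDX g \<beta> w)"
    and vl_fin: "integrable (sampleM Px :: ('n \<Rightarrow> real^'p) measure)
                   (\<lambda>w. matrix_inv (XtDX g \<beta> w) ** XtX w ** matrix_inv (XtDX g \<beta> w))"
    and Hg_fin: "integrable (sampleM Px :: ('n \<Rightarrow> real^'p) measure) (XtDX g \<beta>)"
    and XtX_fin: "integrable (sampleM Px :: ('n \<Rightarrow> real^'p) measure) XtX"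
    and vs_fin: "integrable (sampleM Px :: ('n \<Rightarrow> real^'p) measure) (\<lambda>w. XtX w ** matrix_inv (XtDX g \<beta> w))"
    and cov_fin: "integrable (sampleM Px :: ('n \<Rightarrow> real^'p) measure) (\<lambda>w. real CARD('n) *\<^sub>R covhat g \<beta> w)"
    and var_fin: "integrable (sampleM Px :: ('n \<Rightarrow> real^'p) measure)
                   (\<lambda>w. outerp (real CARD('n) *\<^sub>R covhat g \<beta> w - integral\<^sup>L (sampleM Px :: ('n \<Rightarrow> real^'p) measure) (\<lambda>w. real CARD('n) *\<^sub>R covhat g \<beta> w))
                                (real CARD('n) *\<^sub>R covhat g \<beta> w - integral\<^sup>L (sampleM Px :: ('n \<Rightarrow> real^'p) measure) (\<lambda>w. real CARD('n) *\<^sub>R covhat g \<beta> w)))"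
    and delta: "\<delta> > 0"
    and cond: "AE x in Px. real_cond_exp Px (vimage_algebra (space Px) (\<lambda>x. outerp x x) borel)
                              (\<lambda>x. deriv g (x \<bullet> \<beta>)) x = \<delta>"
  shows "vgl Px g \<beta> N + vgu Px g \<beta> N - 2 * vgs Px g \<beta> N > 0
     \<and> (let a = \<sigma>2 * (vgl Px g \<beta> N - vgs Px g \<beta> N) /
               (Bg Px g \<beta> N + \<sigma>2 * (vgl Px g \<beta> N + vgu Px g \<beta> N - 2 * vgs Px g \<beta> N))
        in (\<forall>b. rdot Px g \<beta> \<sigma>2 N a \<le> rdot Px g \<beta> \<sigma>2 N b)
           \<and> (\<forall>c. (\<forall>b. rdot Px g \<beta> \<sigma>2 N c \<le> rdot Px g \<beta> \<sigma>2 N b) \<longrightarrow> c = a)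
           \<and> a > 0
           \<and> rdot Px g \<beta> \<sigma>2 N a = \<sigma>2 * vgl Px g \<beta> N
               - \<sigma>2^2 * (vgl Px g \<beta> N - vgs Px g \<beta> N)^2 /
                 (Bg Px g \<beta> N + \<sigma>2 * (vgl Px g \<beta> N + vgu Px g \<beta> N - 2 * vgs Px g \<beta> N)))"
proof -
  let ?M = "sampleM Px :: ('n \<Rightarrow> real^'p) measure"
  interpret Px: prob_space Px by (rule Px_prob)
  interpret MP: prob_space ?M unfolding sampleM_def by (rule prob_space_PiM) (rule Px_prob)
  define d where "d = (\<lambda>x::real^'p. deriv g (x \<bullet> \<beta>))"
  have dg_nn: "\<And>t. deriv g t \<ge> 0" using deriv_nonneg[OF g_mono g_diff] .
  have d_nn: "\<And>x. d x \<ge> 0" unfolding d_def using dg_nn by simp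
  have d_meas: "d \<in> borel_measurable borel"
    unfolding d_def using measurable_compose[OF _ deriv_measurable[OF g_diff], of "\<lambda>x::real^'p. x \<bullet> \<beta>" borel]
    by simp
  have cond': "AE x in Px. real_cond_exp Px (vimage_algebra (space Px) (\<lambda>x. outerp x x) borel) d x = \<delta>"
    using cond unfolding d_def .
  have ci[measurable]: "(\<lambda>w. w i) \<in> measurable ?M borel" for i
  proof -
    have "(\<lambda>w. w i) \<in> measurable (PiM UNIV (\<lambda>_. Px)) Px" by (rule measurable_component_singleton) simp
    then show ?thesis unfolding sampleM_def by (simp add: measurable_cong_sets[OF refl Px_sets])
  qed
  have dim[measurable]: "(\<lambda>w. d (w i)) \<in> borel_measurable ?M" for i
    using measurable_compose[OF ci d_meas] .
  have KEY: "(\<integral> w. d (w i) * f w \<partial>?M) = \<delta> * (\<integral> w. f w \<partial>?M)"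
    if "\<And>c. (\<lambda>Q. \<psi> Q c) \<in> borel_measurable borel" "\<And>w. f w = \<psi> (outerp (w i) (w i)) (w(i:=0))"
       "\<And>w. f w \<ge> 0" "f \<in> borel_measurable ?M"
    for i and f :: "('n \<Rightarrow> real^'p) \<Rightarrow> real" and \<psi> :: "real^'p^'p \<Rightarrow> ('n \<Rightarrow> real^'p) \<Rightarrow> real"
    by (rule prod_key_real[OF Px_prob Px_sets d_meas d_nn cond' delta that])
  have Am[measurable]: "XtDX g \<beta> \<in> borel_measurable ?M" using Hg_fin by auto
  have Cm[measurable]: "XtX \<in> borel_measurable ?M" using XtX_fin by auto
  define EC where "EC = (\<integral> w. XtX w \<partial>?M)"
  define H where "H = Hg Px g \<beta> N"
  have H_int: "H = (\<integral> w. XtDX g \<beta> w \<partial>?M)" unfolding H_def Hg_def by simp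
  have XtDX_d: "XtDX g \<beta> w = (\<Sum>i\<in>UNIV. d (w i) *\<^sub>R outerp (w i) (w i))" for w :: "'n \<Rightarrow> real^'p"
    unfolding d_def by (rule XtDX_sum)
  have XtDX_qf': "v \<bullet> (XtDX g \<beta> w *v v) = (\<Sum>i\<in>UNIV. d (w i) * (w i \<bullet> v)^2)" for v and w :: "'n \<Rightarrow> real^'p"
    unfolding d_def by (rule XtDX_qf)
  have outer_qf: "(x \<bullet> v)^2 = v \<bullet> (outerp x x *v v)" for x v :: "real^'p"
    by (simp add: outer_mv power2_eq_square inner_commute)
  have qfH: "v \<bullet> (H *v v) = \<delta> * (v \<bullet> (EC *v v))" for v
  proof -
    have intA: "integrable ?M (\<lambda>w. v \<bullet> (XtDX g \<beta> w *v v))"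
      using integrable_bounded_linear[OF bl_qf Hg_fin] .
    have intC: "integrable ?M (\<lambda>w. v \<bullet> (XtX w *v v))"
      using integrable_bounded_linear[OF bl_qf XtX_fin] .
    have intAi: "integrable ?M (\<lambda>w. d (w i) * (w i \<bullet> v)^2)" for i
    proof (rule Bochner_Integration.integrable_bound[OF intA])
      show "(\<lambda>w. d (w i) * (w i \<bullet> v)^2) \<in> borel_measurable ?M" by measurable
      show "AE w in ?M. norm (d (w i) * (w i \<bullet> v)^2) \<le> norm (v \<bullet> (XtDX g \<beta> w *v v))"
      proof (rule AE_I2)
        fix w
        have "d (w i) * (w i \<bullet> v)^2 \<le> (\<Sum>i\<in>UNIV. d (w i) * (w i \<bullet> v)^2)"
          by (rule member_le_sum) (auto simp: d_nn)
        moreover have "0 \<le> d (w i) * (w i \<bullet> v)^2" using d_nn by simp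
        ultimately show "norm (d (w i) * (w i \<bullet> v)^2) \<le> norm (v \<bullet> (XtDX g \<beta> w *v v))"
          unfolding XtDX_qf' by simp
      qed
    qed
    have intCi: "integrable ?M (\<lambda>w. (w i \<bullet> v)^2)" for i
    proof (rule Bochner_Integration.integrable_bound[OF intC])
      show "(\<lambda>w. (w i \<bullet> v)^2) \<in> borel_measurable ?M" by measurable
      show "AE w in ?M. norm ((w i \<bullet> v)^2) \<le> norm (v \<bullet> (XtX w *v v))"
      proof (rule AE_I2)
        fix w
        have "(w i \<bullet> v)^2 \<le> (\<Sum>i\<in>UNIV. (w i \<bullet> v)^2)"
          by (rule member_le_sum) auto
        then show "norm ((w i \<bullet> v)^2) \<le> norm (v \<bullet> (XtX w *v v))"
          unfolding XtX_qf by simp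
      qed
    qed
    have "v \<bullet> (H *v v) = (\<integral> w. v \<bullet> (XtDX g \<beta> w *v v) \<partial>?M)"
      unfolding H_int by (rule integral_bounded_linear[OF bl_qf Hg_fin, symmetric])
    also have "\<dots> = (\<integral> w. (\<Sum>i\<in>UNIV. d (w i) * (w i \<bullet> v)^2) \<partial>?M)"
      unfolding XtDX_qf' ..
    also have "\<dots> = (\<Sum>i\<in>UNIV. (\<integral> w. d (w i) * (w i \<bullet> v)^2 \<partial>?M))"
      by (rule Bochner_Integration.integral_sum) (rule intAi)
    also have "\<dots> = (\<Sum>i\<in>UNIV. \<delta> * (\<integral> w. (w i \<bullet> v)^2 \<partial>?M))"
    proof (rule sum.cong[OF refl])
      fix i
      show "(\<integral> w. d (w i) * (w i \<bullet> v)^2 \<partial>?M) = \<delta> * (\<integral> w. (w i \<bullet> v)^2 \<partial>?M)"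
      proof (rule KEY[of "\<lambda>Q c. v \<bullet> (Q *v v)"])
        show "(\<lambda>Q. v \<bullet> (Q *v v)) \<in> borel_measurable borel" for c :: "'n \<Rightarrow> real^'p"
          by (intro borel_measurable_continuous_onI linear_continuous_on bl_qf)
        show "(w i \<bullet> v)^2 = v \<bullet> (outerp (w i) (w i) *v v)" for w by (rule outer_qf)
      qed auto
    qed
    also have "\<dots> = \<delta> * (\<integral> w. (\<Sum>i\<in>UNIV. (w i \<bullet> v)^2) \<partial>?M)"
      by (simp add: Bochner_Integration.integral_sum[OF intCi] sum_distrib_left)
    also have "\<dots> = \<delta> * (\<integral> w. v \<bullet> (XtX w *v v) \<partial>?M)"
      unfolding XtX_qf ..
    also have "\<dots> = \<delta> * (v \<bullet> (EC *v v))"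
      unfolding EC_def by (simp add: integral_bounded_linear[OF bl_qf XtX_fin])
    finally show ?thesis .
  qed
  have EC_sym: "transpose EC = EC"
    unfolding EC_def by (simp add: integral_bounded_linear[OF bl_transpose XtX_fin, symmetric] XtX_sym)
  have H_sym: "transpose H = H"
    unfolding H_int by (simp add: integral_bounded_linear[OF bl_transpose Hg_fin, symmetric] XtDX_sym)
  have H_eq: "H = \<delta> *\<^sub>R EC"
  proof -
    have "H - \<delta> *\<^sub>R EC = 0"
    proof (rule sym_qf_zero)
      show "transpose (H - \<delta> *\<^sub>R EC) = H - \<delta> *\<^sub>R EC"
        using H_sym EC_sym by (simp add: transpose_def vec_eq_iff)
      show "v \<bullet> ((H - \<delta> *\<^sub>R EC) *v v) = 0" for v
        using qfH[of v] by (simp add: matrix_vector_mult_diff_rdistrib scaleR_mv inner_diff_right)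
    qed
    then show ?thesis by simp
  qed
  have invC: "invertible (XtX w)" if "invertible (XtDX g \<beta> w)" for w :: "'n \<Rightarrow> real^'p"
    using inv_XtDX_imp_XtX[OF that] .
  have EC_pd: "0 < v \<bullet> (EC *v v)" if "v \<noteq> 0" for v
  proof -
    have "v \<bullet> (EC *v v) = (\<integral> w. v \<bullet> (XtX w *v v) \<partial>?M)"
      unfolding EC_def by (simp add: integral_bounded_linear[OF bl_qf XtX_fin])
    also have "(\<integral> w. 0 \<partial>?M) < \<dots>"
    proof (rule MP.integral_less_AE_space)
      show "integrable ?M (\<lambda>w. v \<bullet> (XtX w *v v))" using integrable_bounded_linear[OF bl_qf XtX_fin] .
      show "emeasure ?M (space ?M) \<noteq> 0" by (simp add: MP.emeasure_space_1)
      show "AE w in ?M. 0 < v \<bullet> (XtX w *v v)"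
        using inv_as
      proof eventually_elim
        case (elim w)
        have ic: "invertible (XtX w)" using invC[OF elim] .
        show ?case
        proof (rule ccontr)
          assume "\<not> 0 < v \<bullet> (XtX w *v v)"
          then have "(\<Sum>i\<in>UNIV. (w i \<bullet> v)^2) = 0"
            unfolding XtX_qf using sum_nonneg[of UNIV "\<lambda>i. (w i \<bullet> v)^2"] by force
          then have z: "\<forall>i\<in>UNIV. (w i \<bullet> v)^2 = 0" by (subst sum_nonneg_eq_0_iff[symmetric]) auto
          have "XtX w *v v = 0" unfolding XtX_mv using z by simp
          then have "matrix_inv (XtX w) *v (XtX w *v v) = 0" by simp
          then have "v = 0" by (simp add: matrix_vector_mul_assoc inv_props(2)[OF ic])
          then show False using that by simp
        qed
      qed
    qed simp
    finally show ?thesis by simp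
  qed
  have EC_inv: "invertible EC"
  proof -
    have "\<forall>v. EC *v v = 0 \<longrightarrow> v = 0" using EC_pd by (metis inner_zero_right less_irrefl)
    then show ?thesis using matrix_left_invertible_ker invertible_left_inverse by blast
  qed
  have H_inv: "invertible H" unfolding H_eq using scalar_invertible[OF _ EC_inv] delta by simp
  define Hi where "Hi = matrix_inv H"
  have HH: "Hi ** H = mat 1" "H ** Hi = mat 1" unfolding Hi_def using inv_props[OF H_inv] by auto
  have H_psd: "psd H" unfolding psd_def
  proof
    fix v show "0 \<le> v \<bullet> (H *v v)"
      using EC_pd[of v] delta qfH[of v] by (cases "v = 0") auto
  qed
  have Hi_sym: "transpose Hi = Hi" unfolding Hi_def by (rule inv_sym[OF H_inv H_sym])
  have Hi_psd: "psd Hi" unfolding Hi_def by (rule inv_psd[OF H_inv H_psd])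
  have HiEC: "Hi ** EC = (1/\<delta>) *\<^sub>R mat 1"
  proof -
    have "EC = (1/\<delta>) *\<^sub>R H" unfolding H_eq using delta by simp
    then show ?thesis by (simp add: mm_scaleR_right HH)
  qed
  define p where "p = real CARD('p)"
  define n where "n = real CARD('n)"
  define k where "k = (n - 1) / n"
  have tr_HiEC: "trace (Hi ** EC) = p / \<delta>" unfolding HiEC p_def by (simp add: trace_scaleR trace_I)
  have vgu_eq: "vgu Px g \<beta> N = k * (p / \<delta>)"
    unfolding vgu_def k_def n_def tr_HiEC[symmetric] Hi_def H_def EC_def by simp
  define s where "s = trace (\<integral> w. XtX w ** matrix_inv (XtDX g \<beta> w) \<partial>?M)"
  have vgs_eq: "vgs Px g \<beta> N = k * s" unfolding vgs_def k_def n_def s_def by simp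
  have step5: "0 \<le> vgl Px g \<beta> N - 2 * t * s + t^2 * (p / \<delta>)" for t
  proof -
    define F1 where "F1 = (\<lambda>w::'n \<Rightarrow> real^'p. trace (matrix_inv (XtDX g \<beta> w) ** XtX w ** matrix_inv (XtDX g \<beta> w) ** H))"
    define F2 where "F2 = (\<lambda>w::'n \<Rightarrow> real^'p. trace (XtX w ** matrix_inv (XtDX g \<beta> w)))"
    define F3 where "F3 = (\<lambda>w::'n \<Rightarrow> real^'p. trace (Hi ** XtX w))"
    have i1: "integrable ?M F1" unfolding F1_def using integrable_bounded_linear[OF bl_trace_r vl_fin] .
    have i2: "integrable ?M F2" unfolding F2_def using integrable_bounded_linear[OF bl_trace vs_fin] .
    have i3: "integrable ?M F3" unfolding F3_def using integrable_bounded_linear[OF bl_trace_l XtX_fin] .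
    have e1: "(\<integral> w. F1 w \<partial>?M) = vgl Px g \<beta> N"
      unfolding F1_def vgl_def H_def[symmetric] by (rule integral_bounded_linear[OF bl_trace_r vl_fin])
    have e2: "(\<integral> w. F2 w \<partial>?M) = s"
      unfolding F2_def s_def by (rule integral_bounded_linear[OF bl_trace vs_fin])
    have e3: "(\<integral> w. F3 w \<partial>?M) = p / \<delta>"
      unfolding F3_def tr_HiEC[symmetric] EC_def by (rule integral_bounded_linear[OF bl_trace_l XtX_fin])
    have "AE w in ?M. 0 \<le> F1 w - 2 * t * F2 w + t^2 * F3 w"
      using inv_as
    proof eventually_elim
      case (elim w)
      have sA: "transpose (matrix_inv (XtDX g \<beta> w)) = matrix_inv (XtDX g \<beta> w)"
        by (rule inv_sym[OF elim XtDX_sym])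
      show ?case
        using step5_pw[OF sA Hi_sym H_psd HH, of "Xmat w" t]
        unfolding F1_def F2_def F3_def XtX_def by simp
    qed
    then have "0 \<le> (\<integral> w. F1 w - 2 * t * F2 w + t^2 * F3 w \<partial>?M)"
      by (rule integral_nonneg_AE)
    also have "\<dots> = (\<integral> w. F1 w \<partial>?M) - 2 * t * (\<integral> w. F2 w \<partial>?M) + t^2 * (\<integral> w. F3 w \<partial>?M)"
      using i1 i2 i3 by simp
    finally show ?thesis unfolding e1 e2 e3 .
  qed
  have fim[measurable]: "(\<lambda>w. fi i w) \<in> borel_measurable ?M" for i
    unfolding fi_def by measurable
  have fi_int: "integrable ?M (\<lambda>w. fi i w)" for i
  proof (rule MP.integrable_const_bound[where B=1])
    show "AE w in ?M. norm (fi i w) \<le> 1"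
    proof (rule AE_I2)
      fix w show "norm (fi i w) \<le> 1" using fi_bounds[of i w] by simp
    qed
  qed simp
  have dfi_int: "integrable ?M (\<lambda>w. d (w i) * fi i w)" for i
  proof (rule Bochner_Integration.integrable_bound[OF d_integrable[OF Px_prob Px_sets d_meas d_nn cond' delta, of i]])
    show "(\<lambda>w. d (w i) * fi i w) \<in> borel_measurable ?M" by measurable
    show "AE w in ?M. norm (d (w i) * fi i w) \<le> norm (d (w i))"
    proof (rule AE_I2)
      fix w
      have "d (w i) * fi i w \<le> d (w i) * 1" using fi_bounds[of i w] d_nn[of "w i"] by (intro mult_left_mono) auto
      moreover have "0 \<le> d (w i) * fi i w" using fi_bounds[of i w] d_nn[of "w i"] by simp
      ultimately show "norm (d (w i) * fi i w) \<le> norm (d (w i))" using d_nn[of "w i"] by simp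
    qed
  qed
  have step6: "s \<ge> p / \<delta>"
  proof -
    define F2 where "F2 = (\<lambda>w::'n \<Rightarrow> real^'p. trace (XtX w ** matrix_inv (XtDX g \<beta> w)))"
    define G where "G = (\<lambda>w::'n \<Rightarrow> real^'p. \<Sum>i\<in>UNIV. d (w i) * fi i w)"
    have i2: "integrable ?M F2" unfolding F2_def using integrable_bounded_linear[OF bl_trace vs_fin] .
    have iG: "integrable ?M G" unfolding G_def using dfi_int by auto
    have e2: "(\<integral> w. F2 w \<partial>?M) = s"
      unfolding F2_def s_def by (rule integral_bounded_linear[OF bl_trace vs_fin])
    have AEdet: "AE w in ?M. det (XtX w) \<noteq> 0"
      using inv_as by eventually_elim (use invC invertible_det_nz in blast)
    have eG: "(\<integral> w. G w \<partial>?M) = \<delta> * p"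
    proof -
      have "(\<integral> w. G w \<partial>?M) = (\<Sum>i\<in>UNIV. (\<integral> w. d (w i) * fi i w \<partial>?M))"
        unfolding G_def by (rule Bochner_Integration.integral_sum) (rule dfi_int)
      also have "\<dots> = (\<Sum>i\<in>UNIV. \<delta> * (\<integral> w. fi i w \<partial>?M))"
      proof (rule sum.cong[OF refl])
        fix i
        show "(\<integral> w. d (w i) * fi i w \<partial>?M) = \<delta> * (\<integral> w. fi i w \<partial>?M)"
        proof (rule KEY[of "\<lambda>Q c. trace (minv (Q + XtX c) ** Q)"])
          show "(\<lambda>Q. trace (minv (Q + XtX c) ** Q)) \<in> borel_measurable borel" for c :: "'n \<Rightarrow> real^'p"
            by measurable
          show "fi i w = trace (minv (outerp (w i) (w i) + XtX (w(i := 0))) ** outerp (w i) (w i))" for w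
            by (rule fi_phi)
          show "0 \<le> fi i w" for w using fi_bounds by blast
        qed simp
      qed
      also have "\<dots> = \<delta> * (\<integral> w. (\<Sum>i\<in>UNIV. fi i w) \<partial>?M)"
        by (simp add: Bochner_Integration.integral_sum[OF fi_int] sum_distrib_left)
      also have "(\<integral> w. (\<Sum>i\<in>UNIV. fi i w) \<partial>?M) = (\<integral> w. p \<partial>?M)"
        by (rule integral_cong_AE) (use AEdet fi_sum p_def in auto)
      also have "(\<integral> w. p \<partial>?M) = p" by (simp add: MP.prob_space)
      finally show ?thesis .
    qed
    have "AE w in ?M. 2 * \<delta> * p - G w \<le> \<delta>^2 * F2 w"
      using inv_as
    proof eventually_elim
      case (elim w)
      have ic: "invertible (XtX w)" using invC[OF elim] .
      have dC: "det (XtX w) \<noteq> 0" using ic invertible_det_nz by blast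
      have pA: "psd (matrix_inv (XtDX g \<beta> w))"
        by (rule inv_psd[OF elim XtDX_psd[OF dg_nn]])
      have sAi: "transpose (matrix_inv (XtDX g \<beta> w)) = matrix_inv (XtDX g \<beta> w)"
        by (rule inv_sym[OF elim XtDX_sym])
      have sCi: "transpose (matrix_inv (XtX w)) = matrix_inv (XtX w)"
        by (rule inv_sym[OF ic XtX_sym])
      have CC: "matrix_inv (XtX w) ** (transpose (Xmat w) ** Xmat w) = mat 1"
               "(transpose (Xmat w) ** Xmat w) ** matrix_inv (XtX w) = mat 1"
        using inv_props[OF ic] unfolding XtX_def by auto
      have "0 \<le> \<delta>^2 * trace ((transpose (Xmat w) ** Xmat w) ** matrix_inv (XtDX g \<beta> w))
               + trace (matrix_inv (XtX w) ** XtDX g \<beta> w) - 2 * \<delta> * real CARD('p)"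
        by (rule step6_pw[OF XtDX_sym pA inv_props(2,1)[OF elim] CC sAi sCi])
      moreover have "trace (matrix_inv (XtX w) ** XtDX g \<beta> w) = G w"
        unfolding G_def d_def by (rule fi_A[OF dC])
      ultimately show ?case unfolding F2_def XtX_def p_def by simp
    qed
    then have "(\<integral> w. 2 * \<delta> * p - G w \<partial>?M) \<le> (\<integral> w. \<delta>^2 * F2 w \<partial>?M)"
      by (rule integral_mono_AE[rotated 2]) (use iG i2 in auto)
    then have "2 * \<delta> * p - \<delta> * p \<le> \<delta>^2 * s"
      using iG i2 by (simp add: e2 eG MP.prob_space)
    then have "\<delta> * p \<le> \<delta> * (\<delta> * s)" by (simp add: power2_eq_square algebra_simps)
    then have "p \<le> \<delta> * s" using delta by simp
    then show ?thesis using delta by (simp add: field_simps)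
  qed
  have Bnn: "Bg Px g \<beta> N \<ge> 0"
  proof -
    define Z where "Z = (\<lambda>w::'n \<Rightarrow> real^'p. real CARD('n) *\<^sub>R covhat g \<beta> w)"
    define u where "u = (\<lambda>w. Z w - (\<integral> w. Z w \<partial>?M))"
    have vi: "integrable ?M (\<lambda>w. outerp (u w) (u w))" using var_fin unfolding u_def Z_def .
    have "Bg Px g \<beta> N = trace (Hi ** (\<integral> w. outerp (u w) (u w) \<partial>?M))"
      unfolding Bg_def varmat_def Hi_def H_def u_def Z_def by simp
    also have "\<dots> = (\<integral> w. trace (Hi ** outerp (u w) (u w)) \<partial>?M)"
      by (rule integral_bounded_linear[OF bl_trace_l vi, symmetric])
    also have "\<dots> \<ge> 0"
      by (rule integral_nonneg_AE) (use Hi_psd in \<open>auto simp: trace_outer psd_def\<close>)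
    finally show ?thesis .
  qed
  have n2: "n \<ge> 2"
  proof -
    have "CARD('p) \<ge> 1" by (simp add: Suc_leI)
    then show ?thesis using p_lt_n unfolding n_def by linarith
  qed
  have k01: "0 < k" "k < 1" unfolding k_def using n2 by (auto simp: field_simps)
  have ppos: "p / \<delta> > 0" unfolding p_def using delta by simp
  show ?thesis
    unfolding rdot_def
    by (rule final_alg[OF ppos k01 sigma_pos Bnn vgu_eq vgs_eq step6 step5])
qed


end
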